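(* Let $B \subset \mathbb{R}^3$ be an open ball and let $\hat{P}' \in \mathbb{R}^3 \setminus B$. If $\hat{P} \in C^-(B,\hat{P}')$, then $C^-(B,\hat{P}) \subset C^-(B,\hat{P}')$.
   Context: For a bounded convex set $B \subset \mathbb{R}^3$ and a point $Q \in \mathbb{R}^3$ with $Q \notin B$, the negative half-cone $C^-(B,Q)$ is the set of points $Y \in \mathbb{R}^3 \setminus \mathrm{cl}(B)$ for which there exist $x' \in B$ and $0 < \alpha < 1$ such that $Y - Q = -\alpha (Q - x')$. Here $\mathrm{cl}(S)$ denotes the topological closure of $S$. *)

theory Defs
  imports "HOL-Analysis.Analysis"
begin

definition neg_half_cone :: "(real^3) set \<Rightarrow> real^3 \<Rightarrow> (real^3) set" where
  "neg_half_cone B Q = {Y. Y \<notin> closure B \<and>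
     (\<exists>x'\<in>B. \<exists>\<alpha>::real. 0 < \<alpha> \<and> \<alpha> < 1 \<and> Y - Q = - (\<alpha> *\<^sub>R (Q - x')))}"

end

theory Submission
  imports Defs
begin

theorem proposition3:
  fixes c P P' :: "real^3" and r :: real
  assumes "r > 0"
    and "P' \<notin> ball c r"
    and "P \<in> neg_half_cone (ball c r) P'"
  shows "neg_half_cone (ball c r) P \<subseteq> neg_half_cone (ball c r) P'"
proof
  fix Y assume "Y \<in> neg_half_cone (ball c r) P"
  then obtain y b where Yc: "Y \<notin> closure (ball c r)" and y: "y \<in> ball c r"
    and b: "0 < b" "b < 1" and Y: "Y - P = - (b *\<^sub>R (P - y))"
    unfolding neg_half_cone_def by blast
  from assms(3) have "\<exists>x\<in>ball c r. \<exists>a::real. 0 < a \<and> a < 1 \<and> P - P' = - (a *\<^sub>R (P' - x))"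
    unfolding neg_half_cone_def by (simp only: mem_Collect_eq)
  then obtain x a where x: "x \<in> ball c r"
    and a: "0 < a" "a < 1" and Pe: "P - P' = - (a *\<^sub>R (P' - x))"
    by blast
  define g where "g = a + b - a * b"
  have ab1: "0 < (1 - a) * (1 - b)" using a b by simp
  have ab2: "0 < b * (1 - a)" using a b by simp
  have g0: "0 < g" unfolding g_def using a ab2 by (simp add: algebra_simps)
  have g1: "g < 1" unfolding g_def using ab1 by (simp add: algebra_simps)
  define z where "z = ((1 - b) * a / g) *\<^sub>R x + (b / g) *\<^sub>R y"
  have gg: "(1 - b) * a + b = g" unfolding g_def by (simp add: algebra_simps)
  have sum1: "(1 - b) * a / g + b / g = 1" using g0
    by (simp add: add_divide_distrib[symmetric] gg)
  have "z \<in> ball c r" unfolding z_def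
    by (rule convexD[OF convex_ball x y]) (use a b g0 sum1 in auto)
  moreover have "Y - P' = - (g *\<^sub>R (P' - z))"
  proof -
    have P: "P = (1 - a) *\<^sub>R P' + a *\<^sub>R x" using Pe by (simp add: algebra_simps)
    have YY: "Y = (1 - b) *\<^sub>R P + b *\<^sub>R y" using Y by (simp add: algebra_simps)
    have gz: "g *\<^sub>R z = ((1 - b) * a) *\<^sub>R x + b *\<^sub>R y"
      unfolding z_def scaleR_add_right scaleR_scaleR using g0 by simp
    have "Y = ((1 - b) * (1 - a)) *\<^sub>R P' + ((1 - b) * a) *\<^sub>R x + b *\<^sub>R y"
      unfolding YY P by (simp add: algebra_simps)
    also have "\<dots> = (1 - g) *\<^sub>R P' + g *\<^sub>R z"
    proof -
      have "1 - g = (1 - b) * (1 - a)" unfolding g_def by (simp add: algebra_simps)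
      then show ?thesis unfolding gz by (simp add: algebra_simps)
    qed
    finally show ?thesis by (simp add: algebra_simps)
  qed
  ultimately show "Y \<in> neg_half_cone (ball c r) P'"
    unfolding neg_half_cone_def mem_Collect_eq using Yc g0 g1 by (intro conjI bexI[of _ z] exI[of _ g]) auto
qed

end
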